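(* Let $\mathbb{K}$ be any field and $G=UU_n(\mathbb{K})$ the group of $n\times n$ upper triangular unipotent matrices over $\mathbb{K}$. If $x=(x_{ij})\in G$ satisfies $\prod_{i=1}^{n-1}x_{i,i+1}\ne 0$, then the centralizer $C_G(x)$ is abelian. *)

theory Defs
  imports Main
begin

text \<open>n x n matrices over a field, represented as functions nat => nat => 'a,
  indices 1..n; entries outside the range are required to be 0 so that
  the representation is canonical.\<close>

definition mat_mult :: "nat \<Rightarrow> (nat \<Rightarrow> nat \<Rightarrow> 'a::field) \<Rightarrow> (nat \<Rightarrow> nat \<Rightarrow> 'a) \<Rightarrow> (nat \<Rightarrow> nat \<Rightarrow> 'a)" where
  "mat_mult n A B = (\<lambda>i j. if i \<in> {1..n} \<and> j \<in> {1..n} then (\<Sum>k=1..n. A i k * B k j) else 0)"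

definition UU :: "nat \<Rightarrow> (nat \<Rightarrow> nat \<Rightarrow> 'a::field) set" where
  "UU n = {A. (\<forall>i j. (i \<notin> {1..n} \<or> j \<notin> {1..n}) \<longrightarrow> A i j = 0)
             \<and> (\<forall>i\<in>{1..n}. A i i = 1)
             \<and> (\<forall>i\<in>{1..n}. \<forall>j\<in>{1..n}. j < i \<longrightarrow> A i j = 0)}"

definition centralizer_UU :: "nat \<Rightarrow> (nat \<Rightarrow> nat \<Rightarrow> 'a::field) \<Rightarrow> (nat \<Rightarrow> nat \<Rightarrow> 'a) set" where
  "centralizer_UU n x = {g \<in> UU n. mat_mult n g x = mat_mult n x g}"

end

theory Submission imports Defs begin

lemma mm_assoc: "mat_mult n (mat_mult n A B) C = mat_mult n A (mat_mult n B C)"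
proof (intro ext)
  fix i j
  have "(\<Sum>k=1..n. (\<Sum>l=1..n. A i l * B l k) * C k j) = (\<Sum>l=1..n. A i l * (\<Sum>k=1..n. B l k * C k j))"
    by (simp add: sum_distrib_left sum_distrib_right mult.assoc) (rule sum.swap)
  then show "mat_mult n (mat_mult n A B) C i j = mat_mult n A (mat_mult n B C) i j"
    unfolding mat_mult_def by (auto intro!: sum.cong)
qed

definition lin :: "nat \<Rightarrow> (nat \<Rightarrow> 'a::field) \<Rightarrow> (nat \<Rightarrow> nat \<Rightarrow> nat \<Rightarrow> 'a) \<Rightarrow> nat \<Rightarrow> nat \<Rightarrow> 'a" where
  "lin K c F = (\<lambda>i j. \<Sum>k<K. c k * F k i j)"

lemma mm_lin_left: "mat_mult n (lin K c F) B = lin K c (\<lambda>k. mat_mult n (F k) B)"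
  unfolding lin_def mat_mult_def
  by (intro ext) (auto simp: sum_distrib_left sum_distrib_right mult.assoc intro: sum.swap)

lemma mm_lin_right: "mat_mult n B (lin K c F) = lin K c (\<lambda>k. mat_mult n B (F k))"
  unfolding lin_def mat_mult_def
  by (intro ext) (auto simp: sum_distrib_left sum_distrib_right mult.assoc mult.left_commute intro: sum.swap)

lemma mm_diff_right: "mat_mult n A (\<lambda>i j. B i j - C i j) = (\<lambda>i j. mat_mult n A B i j - mat_mult n A C i j)"
  unfolding mat_mult_def by (intro ext) (auto simp: right_diff_distrib sum_subtractf)

lemma mm_diff_left: "mat_mult n (\<lambda>i j. B i j - C i j) A = (\<lambda>i j. mat_mult n B A i j - mat_mult n C A i j)"
  unfolding mat_mult_def by (intro ext) (auto simp: left_diff_distrib sum_subtractf)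

definition supp :: "nat \<Rightarrow> (nat \<Rightarrow> nat \<Rightarrow> 'a::field) \<Rightarrow> bool" where
  "supp n A = (\<forall>i j. (i \<notin> {1..n} \<or> j \<notin> {1..n}) \<longrightarrow> A i j = 0)"

definition Imat :: "nat \<Rightarrow> nat \<Rightarrow> nat \<Rightarrow> 'a::field" where
  "Imat n = (\<lambda>i j. if i = j \<and> i \<in> {1..n} then 1 else 0)"

lemma sum_single: "finite S \<Longrightarrow> l \<in> S \<Longrightarrow> (\<And>k. k \<in> S \<Longrightarrow> k \<noteq> l \<Longrightarrow> f k = 0) \<Longrightarrow> sum f S = f l"
  by (simp add: sum.remove sum.neutral)

lemma mm_Id_left: "supp n A \<Longrightarrow> mat_mult n (Imat n) A = A"
  unfolding mat_mult_def Imat_def supp_def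
proof (intro ext)
  fix i j assume s: "\<forall>i j. (i \<notin> {1..n} \<or> j \<notin> {1..n}) \<longrightarrow> A i j = 0"
  show "(if i \<in> {1..n} \<and> j \<in> {1..n} then \<Sum>k = 1..n. (if i = k \<and> i \<in> {1..n} then 1 else 0) * A k j else 0) = A i j"
  proof (cases "i \<in> {1..n} \<and> j \<in> {1..n}")
    case True
    then show ?thesis by (subst sum_single[of _ i]) auto
  qed (use s in auto)
qed

lemma mm_Id_right: "supp n A \<Longrightarrow> mat_mult n A (Imat n) = A"
  unfolding mat_mult_def Imat_def supp_def
proof (intro ext)
  fix i j assume s: "\<forall>i j. (i \<notin> {1..n} \<or> j \<notin> {1..n}) \<longrightarrow> A i j = 0"
  show "(if i \<in> {1..n} \<and> j \<in> {1..n} then \<Sum>k = 1..n. A i k * (if k = j \<and> k \<in> {1..n} then 1 else 0) else 0) = A i j"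
  proof (cases "i \<in> {1..n} \<and> j \<in> {1..n}")
    case True
    then show ?thesis by (subst sum_single[of _ j]) auto
  qed (use s in auto)
qed

lemma supp_mm: "supp n (mat_mult n A B)"
  unfolding supp_def mat_mult_def by auto

definition Nm :: "(nat \<Rightarrow> nat \<Rightarrow> 'a::field) \<Rightarrow> nat \<Rightarrow> nat \<Rightarrow> 'a" where
  "Nm x = (\<lambda>i j. if i = j then 0 else x i j)"

primrec pw :: "nat \<Rightarrow> (nat \<Rightarrow> nat \<Rightarrow> 'a::field) \<Rightarrow> nat \<Rightarrow> nat \<Rightarrow> nat \<Rightarrow> 'a" where
  "pw n N 0 = Imat n"
| "pw n N (Suc k) = mat_mult n N (pw n N k)"

lemma supp_Imat: "supp n (Imat n)" unfolding supp_def Imat_def by auto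

lemma supp_pw: "supp n (pw n N k)"
  by (cases k) (auto simp: supp_Imat supp_mm)

lemma pw_N_comm: "supp n N \<Longrightarrow> mat_mult n (pw n N k) N = mat_mult n N (pw n N k)"
proof (induction k)
  case 0 then show ?case by (simp add: mm_Id_left mm_Id_right)
next
  case (Suc k)
  have "mat_mult n (pw n N (Suc k)) N = mat_mult n N (mat_mult n (pw n N k) N)"
    by (simp add: mm_assoc)
  also have "\<dots> = mat_mult n N (pw n N (Suc k))" using Suc by simp
  finally show ?case .
qed

lemma pw_comm: "supp n N \<Longrightarrow> mat_mult n (pw n N a) (pw n N b) = mat_mult n (pw n N b) (pw n N a)"
proof (induction a)
  case 0 then show ?case by (simp add: mm_Id_left mm_Id_right supp_pw)
next
  case (Suc a)
  have "mat_mult n (pw n N (Suc a)) (pw n N b) = mat_mult n N (mat_mult n (pw n N b) (pw n N a))"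
    using Suc by (simp add: mm_assoc)
  also have "\<dots> = mat_mult n (mat_mult n (pw n N b) N) (pw n N a)"
    using Suc by (simp add: mm_assoc[symmetric] pw_N_comm)
  also have "\<dots> = mat_mult n (pw n N b) (pw n N (Suc a))"
    by (simp add: mm_assoc)
  finally show ?case .
qed

lemma pw_zero:
  assumes st: "\<And>i l. l \<le> i \<Longrightarrow> N i l = 0"
  shows "j < i + k \<Longrightarrow> pw n N k i j = 0"
proof (induction k arbitrary: i j)
  case 0 then show ?case by (simp add: Imat_def)
next
  case (Suc k)
  have z: "N i l * pw n N k l j = 0" for l
  proof (cases "l \<le> i")
    case True then show ?thesis using st by simp
  next
    case False then show ?thesis using Suc by simp
  qed
  have "(\<Sum>l=1..n. N i l * pw n N k l j) = 0" using z by (simp add: sum.neutral)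
  then show ?case by (simp add: mat_mult_def)
qed

lemma pw_diag:
  assumes st: "\<And>i l. l \<le> i \<Longrightarrow> N i l = 0"
  shows "1 \<le> i \<Longrightarrow> i + k \<le> n \<Longrightarrow> pw n N k i (i + k) = (\<Prod>m\<in>{i..<i+k}. N m (m+1))"
proof (induction k arbitrary: i)
  case 0 then show ?case by (simp add: Imat_def)
next
  case (Suc k)
  have "pw n N (Suc k) i (i + Suc k) = (\<Sum>l=1..n. N i l * pw n N k l (i + Suc k))"
    using Suc.prems by (simp add: mat_mult_def)
  also have "\<dots> = N i (i+1) * pw n N k (i+1) (i + 1 + k)"
  proof (subst sum_single[of _ "i+1"])
    fix l assume "l \<in> {1..n}" "l \<noteq> i + 1"
    then show "N i l * pw n N k l (i + Suc k) = 0"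
    proof (cases "l \<le> i")
      case True then show ?thesis using st by simp
    next
      case False then show ?thesis using pw_zero[OF st, where j="i + Suc k" and i=l and k=k] \<open>l \<noteq> i + 1\<close> by simp
    qed
  qed (use Suc.prems in auto)
  also have "\<dots> = N i (i+1) * (\<Prod>m\<in>{i+1..<i+1+k}. N m (m+1))"
    using Suc.prems by (subst Suc.IH) auto
  also have "\<dots> = (\<Prod>m\<in>{i..<i+Suc k}. N m (m+1))"
    by (simp add: prod.atLeast_Suc_lessThan)
  finally show ?case .
qed

lemma uniq:
  assumes st: "\<And>i l. l \<le> i \<Longrightarrow> N i l = 0"
    and nz: "\<And>i. 1 \<le> i \<Longrightarrow> i < n \<Longrightarrow> N i (i+1) \<noteq> 0"
    and sB: "supp n B" and cB: "mat_mult n N B = mat_mult n B N"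
    and r1: "\<And>j. B 1 j = 0"
  shows "B i j = 0"
proof (induction j arbitrary: i rule: less_induct)
  case (less j)
  show ?case
  proof (cases "j \<in> {1..n}")
    case False with sB show ?thesis by (simp add: supp_def)
  next
    case True
    have z: "B i' l * N l j = 0" for i' l
    proof (cases "j \<le> l")
      case True then show ?thesis using st by simp
    next
      case False then show ?thesis using less.IH by simp
    qed
    have "(\<Sum>l=1..n. B i' l * N l j) = 0" for i' using z by (simp add: sum.neutral)
    then have BN: "mat_mult n B N i' j = 0" for i' by (simp add: mat_mult_def)
    have NB: "(\<Sum>l=1..n. N i' l * B l j) = 0" if "i' \<in> {1..n}" for i'
      using BN[of i'] that True unfolding cB[symmetric] by (simp add: mat_mult_def)
    have key: "\<forall>l. 2 \<le> l \<longrightarrow> n < l + d \<longrightarrow> B l j = 0" for d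
    proof (induction d)
      case 0 then show ?case using sB by (simp add: supp_def)
    next
      case (Suc d)
      show ?case
      proof (intro allI impI)
        fix l assume l2: "2 \<le> l" and ln: "n < l + Suc d"
        show "B l j = 0"
        proof (cases "n < l + d")
          case True then show ?thesis using Suc.IH l2 by simp
        next
          case False
          then have ld: "l + d = n" using ln by simp
          define i' where "i' = l - 1"
          have il: "l = i' + 1" using l2 i'_def by simp
          have "(\<Sum>l'=1..n. N i' l' * B l' j) = N i' l * B l j"
          proof (rule sum_single)
            fix l' assume "l' \<in> {1..n}" "l' \<noteq> l"
            then show "N i' l' * B l' j = 0"
            proof (cases "l' \<le> i'")
              case True then show ?thesis using st by simp
            next
              case False
              then have "l' > l" using il \<open>l' \<noteq> l\<close> by simp
              then show ?thesis using Suc.IH l2 ld by simp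
            qed
          qed (use l2 ld in auto)
          moreover have "i' \<in> {1..n}" using l2 ld i'_def by auto
          ultimately have "N i' l * B l j = 0" using NB by simp
          moreover have "N i' l \<noteq> 0" using nz[of i'] il l2 ld by simp
          ultimately show ?thesis by simp
        qed
      qed
    qed
    show ?thesis
    proof (cases "i \<ge> 2")
      case True then show ?thesis using key[of n] by simp
    next
      case False
      then have "i = 0 \<or> i = 1" by auto
      then show ?thesis using r1 sB by (auto simp: supp_def)
    qed
  qed
qed

lemma lin_supp: "supp n (lin K c (pw n N))"
  using supp_pw[of n N] unfolding supp_def lin_def by auto

lemma exist:
  assumes st: "\<And>i l. l \<le> i \<Longrightarrow> N i l = 0"
    and nz: "\<And>i. 1 \<le> i \<Longrightarrow> i < n \<Longrightarrow> N i (i+1) \<noteq> 0"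
    and sA: "supp n A"
  shows "\<exists>c. \<forall>j. lin n c (pw n N) 1 j = A 1 j"
proof -
  have "m \<le> n \<Longrightarrow> \<exists>c. \<forall>j. 1 \<le> j \<longrightarrow> j \<le> m \<longrightarrow> lin n c (pw n N) 1 j = A 1 j" for m
  proof (induction m)
    case 0 then show ?case by auto
  next
    case (Suc m)
    then obtain c where c: "\<forall>j. 1 \<le> j \<longrightarrow> j \<le> m \<longrightarrow> lin n c (pw n N) 1 j = A 1 j" by auto
    define p where "p = pw n N m 1 (Suc m)"
    have "p = (\<Prod>m'\<in>{1..<1+m}. N m' (m'+1))"
      unfolding p_def using pw_diag[OF st, where i=1 and k=m and n=n] Suc.prems by simp
    moreover have "\<forall>m'\<in>{1..<1+m}. N m' (m'+1) \<noteq> 0" using nz Suc.prems by auto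
    ultimately have p0: "p \<noteq> 0" by simp
    define \<delta> where "\<delta> = (A 1 (Suc m) - lin n c (pw n N) 1 (Suc m)) / p"
    define c' where "c' = c(m := c m + \<delta>)"
    have upd: "lin n c' (pw n N) 1 j = lin n c (pw n N) 1 j + \<delta> * pw n N m 1 j" for j
    proof -
      have "(\<Sum>k<n. c' k * pw n N k 1 j) = (\<Sum>k<n. c k * pw n N k 1 j + (if k = m then \<delta> * pw n N m 1 j else 0))"
        by (rule sum.cong) (auto simp: c'_def distrib_right)
      also have "\<dots> = (\<Sum>k<n. c k * pw n N k 1 j) + \<delta> * pw n N m 1 j"
        using Suc.prems by (simp add: sum.distrib)
      finally show ?thesis unfolding lin_def .
    qed
    have "\<forall>j. 1 \<le> j \<longrightarrow> j \<le> Suc m \<longrightarrow> lin n c' (pw n N) 1 j = A 1 j"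
    proof (intro allI impI)
      fix j assume j1: "1 \<le> j" and jm: "j \<le> Suc m"
      show "lin n c' (pw n N) 1 j = A 1 j"
      proof (cases "j = Suc m")
        case True then show ?thesis using upd[of j] p0 unfolding \<delta>_def p_def by simp
      next
        case False
        then have "pw n N m 1 j = 0" using pw_zero[OF st, where j=j and i=1 and k=m] jm by simp
        then show ?thesis using upd[of j] c j1 jm False by simp
      qed
    qed
    then show ?case by blast
  qed
  then obtain c where c: "\<forall>j. 1 \<le> j \<longrightarrow> j \<le> n \<longrightarrow> lin n c (pw n N) 1 j = A 1 j" by blast
  have "lin n c (pw n N) 1 j = A 1 j" for j
  proof (cases "1 \<le> j \<and> j \<le> n")
    case True then show ?thesis using c by simp
  next
    case False then show ?thesis using sA lin_supp[of n n c N] by (auto simp: supp_def)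
  qed
  then show ?thesis by blast
qed

lemma lin_comm:
  assumes sN: "supp n N"
  shows "mat_mult n (lin n c (pw n N)) (lin n d (pw n N)) = mat_mult n (lin n d (pw n N)) (lin n c (pw n N))"
proof (intro ext)
  fix i j
  have e: "mat_mult n (lin n a (pw n N)) (lin n b (pw n N)) i j = (\<Sum>l<n. \<Sum>k<n. b l * (a k * mat_mult n (pw n N k) (pw n N l) i j))" for a b
    by (simp only: mm_lin_left mm_lin_right) (simp add: lin_def sum_distrib_left)
  show "mat_mult n (lin n c (pw n N)) (lin n d (pw n N)) i j = mat_mult n (lin n d (pw n N)) (lin n c (pw n N)) i j"
    unfolding e by (rule trans[OF _ sum.swap]) (simp add: pw_comm[OF sN] mult.left_commute)
qed

theorem theorem11p1:
  fixes n :: nat and x :: "nat \<Rightarrow> nat \<Rightarrow> 'a::field"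
  assumes "x \<in> UU n"
    and "(\<Prod>i=1..n-1. x i (i+1)) \<noteq> 0"
  shows "\<forall>g\<in>centralizer_UU n x. \<forall>h\<in>centralizer_UU n x. mat_mult n g h = mat_mult n h g"
proof -
  define N where "N = Nm x"
  have xz: "\<And>i j. (i \<notin> {1..n} \<or> j \<notin> {1..n}) \<Longrightarrow> x i j = 0"
    and xd: "\<And>i. i \<in> {1..n} \<Longrightarrow> x i i = 1"
    and xl: "\<And>i j. i \<in> {1..n} \<Longrightarrow> j \<in> {1..n} \<Longrightarrow> j < i \<Longrightarrow> x i j = 0"
    using assms(1) unfolding UU_def by auto
  have sN: "supp n N" unfolding supp_def N_def Nm_def using xz by auto
  have st: "\<And>i l. l \<le> i \<Longrightarrow> N i l = 0"
  proof -
    fix i l :: nat assume "l \<le> i"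
    then show "N i l = 0" unfolding N_def Nm_def
      using xz[of i l] xl[of i l] by (cases "l = i") auto
  qed
  have nz: "\<And>i. 1 \<le> i \<Longrightarrow> i < n \<Longrightarrow> N i (i+1) \<noteq> 0"
  proof -
    fix i :: nat assume "1 \<le> i" "i < n"
    then have "i \<in> {1..n-1}" by auto
    then show "N i (i+1) \<noteq> 0" using assms(2) unfolding N_def Nm_def by auto
  qed
  have Nx: "N = (\<lambda>i j. x i j - Imat n i j)"
    unfolding N_def Nm_def Imat_def using xd xz by (intro ext) auto
  have cent: "supp n g \<and> mat_mult n g N = mat_mult n N g" if "g \<in> centralizer_UU n x" for g
  proof -
    have sg: "supp n g" using that unfolding centralizer_UU_def UU_def supp_def by auto
    have "mat_mult n g x = mat_mult n x g" using that unfolding centralizer_UU_def by auto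
    then show ?thesis unfolding Nx mm_diff_right mm_diff_left mm_Id_left[OF sg] mm_Id_right[OF sg]
      using sg by simp
  qed
  have rep: "\<exists>c. g = lin n c (pw n N)" if "g \<in> centralizer_UU n x" for g
  proof -
    have sg: "supp n g" and cg: "mat_mult n g N = mat_mult n N g" using cent[OF that] by auto
    obtain c where c: "\<forall>j. lin n c (pw n N) 1 j = g 1 j" using exist[where N=N and n=n, OF st nz sg] by blast
    define B where "B = (\<lambda>i j. g i j - lin n c (pw n N) i j)"
    have sB: "supp n B" using sg lin_supp[of n n c N] unfolding B_def supp_def by auto
    have cl: "mat_mult n N (lin n c (pw n N)) = mat_mult n (lin n c (pw n N)) N"
      by (simp add: mm_lin_left mm_lin_right pw_N_comm[OF sN])
    have cB: "mat_mult n N B = mat_mult n B N"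
      unfolding B_def mm_diff_right mm_diff_left cl cg by simp
    have r1: "\<And>j. B 1 j = 0" using c by (simp add: B_def)
    have "B i j = 0" for i j
      by (rule uniq[where N=N and n=n, OF st nz sB cB r1])
    then have "g = lin n c (pw n N)" unfolding B_def by (intro ext) (simp add: right_minus_eq)
    then show ?thesis by blast
  qed
  show ?thesis
  proof (intro ballI)
    fix g h assume "g \<in> centralizer_UU n x" "h \<in> centralizer_UU n x"
    then obtain c d where "g = lin n c (pw n N)" "h = lin n d (pw n N)" using rep by blast
    then show "mat_mult n g h = mat_mult n h g" using lin_comm[OF sN] by simp
  qed
qed

end
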